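(* For each integer $d\ge2$ let $$\beta_d = \inf_{-\frac{1}{d-1}\le \gamma<1} \frac{1-\frac{F^*(d^2-1,\gamma)}{(d-1)^2}}{1-\gamma}.$$ Then (i) $\beta_d>1-\frac1d$ for every integer $d\ge 2$, and (ii) $\beta_d-\left(1-\frac1d\right)\sim\frac{1}{d^3}$ as $d\to\infty$.
   Context: For an integer $k\ge1$ and $\gamma\in[-1,1]$, $$F^*(k,\gamma)=\frac{2\gamma}{k}\left(\frac{\Gamma((k+1)/2)}{\Gamma(k/2)}\right)^2 {}_2F_1\!\left(\tfrac12,\tfrac12;\tfrac k2+1;\gamma^2\right),$$ where ${}_2F_1$ is the Gaussian hypergeometric function. *)

theory Defs
  imports "HOL-Analysis.Analysis" "HOL-Library.Landau_Symbols"
begin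

definition hyp2F1 :: "real \<Rightarrow> real \<Rightarrow> real \<Rightarrow> real \<Rightarrow> real" where
  "hyp2F1 a b c z =
     (\<Sum>n. pochhammer a n * pochhammer b n / (pochhammer c n * fact n) * z ^ n)"

definition Fstar :: "nat \<Rightarrow> real \<Rightarrow> real" where
  "Fstar k \<gamma> = 2 * \<gamma> / real k * (Gamma ((real k + 1) / 2) / Gamma (real k / 2))\<^sup>2
      * hyp2F1 (1/2) (1/2) (real k / 2 + 1) (\<gamma>\<^sup>2)"

definition beta :: "nat \<Rightarrow> real" where
  "beta d = (INF \<gamma> \<in> {-1 / (real d - 1)..<1}.
      (1 - Fstar (d\<^sup>2 - 1) \<gamma> / (real d - 1)\<^sup>2) / (1 - \<gamma>))"

end

theory Submission
  imports Defs "HOL-Real_Asymp.Real_Asymp"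
begin

definition tt :: "real \<Rightarrow> nat \<Rightarrow> real" where
 "tt K n = pochhammer (1/2) n * pochhammer (1/2) n / (pochhammer K n * fact n)"

lemma hyp_tt: "hyp2F1 (1/2) (1/2) K z = (\<Sum>n. tt K n * z^n)"
  by (simp add: hyp2F1_def tt_def)

lemma tt_nonneg: "K > 0 \<Longrightarrow> tt K n \<ge> 0"
  unfolding tt_def by (intro divide_nonneg_pos mult_nonneg_nonneg mult_pos_pos pochhammer_nonneg pochhammer_pos) auto

lemma tt_0[simp]: "tt K 0 = 1" by (simp add: tt_def)

lemma poch_half_le: "pochhammer (1/2::real) n \<le> (fact n :: real)"
proof (induction n)
  case (Suc n)
  have "pochhammer (1/2::real) (Suc n) = pochhammer (1/2) n * (1/2 + n)" by (simp add: pochhammer_Suc)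
  also have "\<dots> \<le> (fact n :: real) * (1 + n)"
    by (intro mult_mono Suc) (auto intro!: pochhammer_nonneg)
  also have "\<dots> = (fact (Suc n) :: real)" by (simp add: algebra_simps)
  finally show ?case .
qed simp

lemma poch_half_le2: "n \<ge> 1 \<Longrightarrow> 2 * pochhammer (1/2::real) n \<le> (fact n :: real)"
proof (induction n rule: dec_induct)
  case base then show ?case by (simp add: pochhammer_Suc)
next
  case (step n)
  have "2 * pochhammer (1/2::real) (Suc n) = 2 * pochhammer (1/2) n * (1/2 + n)" by (simp add: pochhammer_Suc)
  also have "\<dots> \<le> (fact n :: real) * (1 + n)"
    by (intro mult_mono step) (auto intro!: pochhammer_nonneg)
  also have "\<dots> = (fact (Suc n) :: real)" by (simp add: algebra_simps)
  finally show ?case .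
qed

lemma poch_mono: "0 < (K::real) \<Longrightarrow> K \<le> L \<Longrightarrow> pochhammer K n \<le> pochhammer L n"
proof (induction n)
  case (Suc n)
  then show ?case by (auto simp: pochhammer_Suc intro!: mult_mono pochhammer_nonneg)
qed simp

lemma poch5: "pochhammer (5::real) n * 24 = (fact (n+4) :: real)"
proof (induction n)
  case 0 then show ?case by (simp add: fact_numeral)
next
  case (Suc n)
  have "pochhammer (5::real) (Suc n) * 24 = (pochhammer (5::real) n * 24) * (5 + n)" by (simp add: pochhammer_Suc)
  also have "\<dots> = (fact (n+4) :: real) * (5+n)" using Suc by simp
  also have "\<dots> = (fact (Suc (n + 4)) :: real)" by (simp only: fact_Suc of_nat_mult) (simp add: algebra_simps)
  also have "Suc (n+4) = Suc n + 4" by simp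
  finally show ?case .
qed

lemma poch52: "pochhammer (1/2::real) n * ((2*real n+1)*(2*real n+3)) = 3 * pochhammer (5/2) n"
proof (induction n)
  case (Suc n)
  have "pochhammer (1/2::real) (Suc n) * ((2*real (Suc n)+1)*(2*real (Suc n)+3))
     = (pochhammer (1/2) n * ((2*real n+1)*(2*real n+3))) * ((n+5/2))"
    by (simp add: pochhammer_Suc algebra_simps)
  also have "\<dots> = 3 * pochhammer (5/2) (Suc n)" using Suc by (simp add: pochhammer_Suc algebra_simps)
  finally show ?case .
qed simp

lemma tt_le52: assumes "K \<ge> 5/2" shows "tt K n \<le> 3/((2*real n+1)*(2*real n+3))"
proof -
  have p0: "pochhammer (1/2::real) n \<ge> 0" by (rule pochhammer_nonneg) auto
  have pK: "pochhammer K n \<ge> pochhammer (5/2) n" using assms by (intro poch_mono) auto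
  have p52: "pochhammer (5/2::real) n > 0" by (rule pochhammer_pos) auto
  have "tt K n = (pochhammer (1/2) n / fact n) * (pochhammer (1/2) n / pochhammer K n)"
    by (simp add: tt_def)
  also have "\<dots> \<le> 1 * (pochhammer (1/2) n / pochhammer (5/2) n)"
    using p0 pK p52 poch_half_le[of n]
    by (intro mult_mono divide_left_mono) (auto simp: divide_le_eq_1)
  also have "\<dots> = 3/((2*real n+1)*(2*real n+3))"
  proof -
    have "pochhammer (1/2::real) n = 3 * pochhammer (5/2) n / ((2*real n+1)*(2*real n+3))"
      using poch52[of n] by (simp add: eq_divide_eq del: of_nat_mult)
    then show ?thesis using p52 by simp
  qed
  finally show ?thesis .
qed

lemma tt_le5: assumes "K \<ge> 5" "n \<ge> 1" shows "(2*real n+1) * tt K n \<le> 12/((real n+2)*(real n+3)*(real n+4))"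
proof -
  have p0: "pochhammer (1/2::real) n \<ge> 0" by (rule pochhammer_nonneg) auto
  have pK: "pochhammer K n \<ge> pochhammer 5 n" using assms by (intro poch_mono) auto
  have p5: "pochhammer (5::real) n > 0" by (rule pochhammer_pos) auto
  have h2: "pochhammer (1/2::real) n \<le> fact n / 2" using poch_half_le2[OF assms(2)] by simp
  have "tt K n = (pochhammer (1/2) n / fact n) * (pochhammer (1/2) n / pochhammer K n)"
    by (simp add: tt_def)
  also have "\<dots> \<le> (1/2) * ((fact n / 2) / pochhammer 5 n)"
  proof (rule mult_mono)
    show "pochhammer (1/2) n / fact n \<le> (1/2::real)" using h2 by (simp add: divide_le_eq)
    show "pochhammer (1/2) n / pochhammer K n \<le> (fact n / 2) / pochhammer 5 n"
      using p0 pK p5 h2 by (intro frac_le) auto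
  qed (use p0 p5 pK in \<open>auto intro!: divide_nonneg_pos\<close>)
  also have "\<dots> = 6 * fact n / (fact (n+4) :: real)" using poch5[of n] p5 by (simp add: field_simps)
  also have "(fact (n+4) :: real) = fact n * ((real n+1)*(n+2)*(n+3)*(n+4))"
    by (simp add: fact_Suc numeral_eq_Suc algebra_simps)
  finally have "tt K n \<le> 6 / ((real n+1)*(n+2)*(n+3)*(n+4))" by simp
  hence "(2*real n+1) * tt K n \<le> (2*real n+1) * (6 / ((real n+1)*(n+2)*(n+3)*(n+4)))"
    by (intro mult_left_mono) auto
  also have "\<dots> = ((12*real n+6)/(real n+1)) / ((real n+2)*(real n+3)*(real n+4))"
    by (simp add: field_simps)
  also have "\<dots> \<le> 12/((real n+2)*(real n+3)*(real n+4))"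
    by (intro divide_right_mono) (auto simp: divide_le_eq)
  finally show ?thesis by simp
qed

lemma l1: fixes x::real assumes "x \<ge> 0" shows "(3/2 - 3/(2*(2*x+1))) + 3/((2*x+1)*(2*x+3)) = 3/2 - 3/(2*(2*(x+1)+1))"
proof -
  have "2*x+1 > 0" "2*x+3 > 0" "(2*x+1)*(2*x+3) > 0" using assms by auto
  then show ?thesis by (simp add: divide_simps) (simp add: algebra_simps)
qed
lemma l2: fixes x::real assumes "x \<ge> 0" shows "(3/2 - 6/((x+2)*(x+3))) + 12/((x+2)*(x+3)*(x+4)) = 3/2 - 6/((x+3)*(x+4))"
proof -
  have "x+2 > 0" "x+3 > 0" "x+4 > 0" "(x+2)*(x+3) > 0" "(x+2)*(x+3)*(x+4) > 0" "(x+3)*(x+4) > 0" using assms by auto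
  then show ?thesis by (simp add: divide_simps) (simp add: algebra_simps)
qed

lemma tel52: "(\<Sum>n<N. 3/((2*real n+1)*(2*real n+3))) = 3/2 - 3/(2*(2*real N+1))"
proof (induction N)
  case (Suc N)
  have "(\<Sum>n<Suc N. 3/((2*real n+1)*(2*real n+3))) = (3/2 - 3/(2*(2*real N+1))) + 3/((2*real N+1)*(2*real N+3))"
    using Suc by simp
  also have "\<dots> = 3/2 - 3/(2*(2*real (Suc N)+1))" using l1[of "real N"] by simp
  finally show ?case .
qed simp

lemma summable_tt: assumes "K \<ge> 5/2" shows "summable (tt K)"
proof (rule summableI_nonneg_bounded)
  show "0 \<le> tt K n" for n using assms by (intro tt_nonneg) auto
  show "(\<Sum>i<n. tt K i) \<le> 3/2" for n
  proof -
    have "(\<Sum>i<n. tt K i) \<le> (\<Sum>i<n. 3/((2*real i+1)*(2*real i+3)))"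
      using assms by (intro sum_mono tt_le52) auto
    also have "\<dots> \<le> 3/2" by (simp add: tel52)
    finally show ?thesis .
  qed
qed

lemma summable_tt_z: assumes "K \<ge> 5/2" "\<bar>z\<bar> \<le> 1" shows "summable (\<lambda>n. tt K n * z^n)"
proof (rule summable_comparison_test[OF _ summable_tt[OF assms(1)]])
  show "\<exists>N. \<forall>n\<ge>N. norm (tt K n * z ^ n) \<le> tt K n"
  proof (intro exI allI impI)
    fix n
    have "tt K n \<ge> 0" using assms by (intro tt_nonneg) auto
    moreover have "\<bar>z\<bar>^n \<le> 1" using assms by (simp add: power_le_one)
    ultimately show "norm (tt K n * z ^ n) \<le> tt K n"
      by (simp add: abs_mult power_abs mult_left_le)
  qed
qed

lemma partial5: assumes "K \<ge> 5" "N \<ge> 1"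
  shows "(\<Sum>n<N. (2*real n+1) * tt K n) \<le> 3/2 - 6/((real N+2)*(real N+3))"
  using assms(2)
proof (induction N rule: dec_induct)
  case base then show ?case by simp
next
  case (step N)
  have "(\<Sum>n<Suc N. (2*real n+1) * tt K n) = (\<Sum>n<N. (2*real n+1) * tt K n) + (2*real N+1) * tt K N"
    by simp
  also have "\<dots> \<le> (3/2 - 6/((real N+2)*(real N+3))) + 12/((real N+2)*(real N+3)*(real N+4))"
    using step.IH tt_le5[OF assms(1) step.hyps(1)] by linarith
  also have "\<dots> = 3/2 - 6/((real N+3)*(real N+4))"
    using l2[of "real N"] by simp
  also have "\<dots> = 3/2 - 6/((real (Suc N)+2)*(real (Suc N)+3))"
    by (simp add: algebra_simps)
  finally show ?case .
qed

lemma summable_S: assumes "K \<ge> 5" shows "summable (\<lambda>n. (2*real n+1) * tt K n)"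
  and "(\<Sum>n. (2*real n+1) * tt K n) \<le> 3/2"
proof -
  have b: "(\<Sum>i<N. (2*real i+1) * tt K i) \<le> 3/2" for N
  proof (cases "N \<ge> 1")
    case True
    have "6/((real N+2)*(real N+3)) \<ge> 0" by simp
    then show ?thesis using partial5[OF assms True] by linarith
  next
    case False then have "N = 0" by simp
    then show ?thesis by simp
  qed
  have nn: "0 \<le> (2*real n+1) * tt K n" for n using assms by (intro mult_nonneg_nonneg tt_nonneg) auto
  show s: "summable (\<lambda>n. (2*real n+1) * tt K n)"
    by (rule summableI_nonneg_bounded[OF nn b])
  show "(\<Sum>n. (2*real n+1) * tt K n) \<le> 3/2"
    by (rule suminf_le_const[OF s b])
qed

lemma sum_tt_le_S: assumes "K \<ge> 5" shows "suminf (tt K) \<le> (\<Sum>n. (2*real n+1) * tt K n)"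
proof (rule suminf_le)
  show "summable (tt K)" using assms by (intro summable_tt) auto
  show "summable (\<lambda>n. (2*real n+1) * tt K n)" using assms by (rule summable_S)
  fix n
  have "tt K n = 1 * tt K n" by simp
  also have "\<dots> \<le> (2*real n+1) * tt K n" using assms by (intro mult_right_mono tt_nonneg) auto
  finally show "tt K n \<le> (2*real n+1) * tt K n" .
qed

definition G :: "real \<Rightarrow> real \<Rightarrow> real" where
  "G K g = (\<Sum>n. tt K n * g^(2*n+1))"

lemma G_hyp: assumes "K \<ge> 5/2" "\<bar>g\<bar> \<le> 1"
  shows "g * hyp2F1 (1/2) (1/2) K (g\<^sup>2) = G K g"
proof -
  have "\<bar>g\<^sup>2\<bar> \<le> 1" using assms by (simp add: abs_square_le_1)
  then have s: "summable (\<lambda>n. tt K n * (g\<^sup>2)^n)" using summable_tt_z assms by blast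
  have "g * hyp2F1 (1/2) (1/2) K (g\<^sup>2) = (\<Sum>n. tt K n * (g\<^sup>2)^n) * g" by (simp add: hyp_tt)
  also have "\<dots> = (\<Sum>n. tt K n * (g\<^sup>2)^n * g)" by (rule suminf_mult2[OF s])
  also have "\<dots> = G K g" unfolding G_def by (simp add: power_mult[symmetric] mult_ac)
  finally show ?thesis .
qed

lemma summable_G: assumes "K \<ge> 5/2" "\<bar>g\<bar> \<le> 1" shows "summable (\<lambda>n. tt K n * g^(2*n+1))"
proof -
  have "\<bar>g\<^sup>2\<bar> \<le> 1" using assms by (simp add: abs_square_le_1)
  then have s: "summable (\<lambda>n. tt K n * (g\<^sup>2)^n)" using summable_tt_z assms by blast
  have "summable (\<lambda>n. tt K n * (g\<^sup>2)^n * g)" by (rule summable_mult2[OF s])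
  then show ?thesis by (simp add: power_mult[symmetric] mult_ac)
qed

lemma pow_diff_le: fixes x y :: real assumes "\<bar>x\<bar> \<le> 1" "\<bar>y\<bar> \<le> 1"
  shows "\<bar>x^m - y^m\<bar> \<le> real m * \<bar>x - y\<bar>"
proof (induction m)
  case (Suc m)
  have "x^Suc m - y^Suc m = x * (x^m - y^m) + y^m * (x - y)" by (simp add: algebra_simps)
  hence "\<bar>x^Suc m - y^Suc m\<bar> \<le> \<bar>x\<bar> * \<bar>x^m - y^m\<bar> + \<bar>y\<bar>^m * \<bar>x - y\<bar>"
    by (metis abs_mult abs_triangle_ineq power_abs)
  also have "\<dots> \<le> 1 * (real m * \<bar>x - y\<bar>) + 1 * \<bar>x - y\<bar>"
    using assms Suc by (intro add_mono mult_mono) (auto simp: power_le_one)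
  finally show ?case by (simp add: algebra_simps)
qed simp

lemma G_diff: assumes "K \<ge> 5" "-1 \<le> g0" "g0 \<le> g" "g \<le> 1"
  shows "G K g - G K g0 \<le> (g - g0) * (\<Sum>n. (2*real n+1) * tt K n)"
proof -
  have K: "K \<ge> 5/2" using assms by simp
  have a1: "\<bar>g\<bar> \<le> 1" "\<bar>g0\<bar> \<le> 1" using assms by auto
  have s1: "summable (\<lambda>n. tt K n * g^(2*n+1))" by (rule summable_G[OF K a1(1)])
  have s2: "summable (\<lambda>n. tt K n * g0^(2*n+1))" by (rule summable_G[OF K a1(2)])
  have sS: "summable (\<lambda>n. (2*real n+1) * tt K n)" by (rule summable_S[OF assms(1)])
  have "G K g - G K g0 = (\<Sum>n. tt K n * g^(2*n+1) - tt K n * g0^(2*n+1))"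
    unfolding G_def by (rule suminf_diff[OF s1 s2])
  also have "\<dots> \<le> (\<Sum>n. (g - g0) * ((2*real n+1) * tt K n))"
  proof (rule suminf_le)
    show "summable (\<lambda>n. tt K n * g^(2*n+1) - tt K n * g0^(2*n+1))" by (rule summable_diff[OF s1 s2])
    show "summable (\<lambda>n. (g - g0) * ((2*real n+1) * tt K n))" by (rule summable_mult[OF sS])
    fix n
    have t: "tt K n \<ge> 0" using assms by (intro tt_nonneg) auto
    have "g^(2*n+1) - g0^(2*n+1) \<le> \<bar>g^(2*n+1) - g0^(2*n+1)\<bar>" by simp
    also have "\<dots> \<le> real (2*n+1) * \<bar>g - g0\<bar>" by (rule pow_diff_le[OF a1])
    also have "\<dots> = (2*real n+1) * (g - g0)" using assms by simp
    finally have "tt K n * (g^(2*n+1) - g0^(2*n+1)) \<le> tt K n * ((2*real n+1) * (g - g0))"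
      using t by (intro mult_left_mono) auto
    then show "tt K n * g^(2*n+1) - tt K n * g0^(2*n+1) \<le> (g - g0) * ((2*real n+1) * tt K n)"
      by (simp add: algebra_simps)
  qed
  also have "\<dots> = (g - g0) * (\<Sum>n. (2*real n+1) * tt K n)" by (rule suminf_mult[OF sS])
  finally show ?thesis .
qed

lemma hyp_ge1: assumes "K \<ge> 5/2" "0 \<le> z" "z \<le> 1" shows "1 \<le> hyp2F1 (1/2) (1/2) K z"
proof -
  have s: "summable (\<lambda>n. tt K n * z^n)" using summable_tt_z assms by auto
  have "(\<Sum>n\<in>{0}. tt K n * z^n) \<le> (\<Sum>n. tt K n * z^n)"
    using assms by (intro sum_le_suminf[OF s]) (auto intro!: mult_nonneg_nonneg tt_nonneg)
  then show ?thesis by (simp add: hyp_tt)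
qed

lemma hyp_le: assumes "K \<ge> 5" "0 \<le> z" "z \<le> 1" shows "hyp2F1 (1/2) (1/2) K z \<le> 1 + z/2"
proof -
  have K: "K \<ge> 5/2" using assms by simp
  have s: "summable (\<lambda>n. tt K n * z^n)" using summable_tt_z K assms by auto
  have st: "summable (tt K)" by (rule summable_tt[OF K])
  have st1: "summable (\<lambda>n. tt K (Suc n))" by (subst summable_Suc_iff) (rule st)
  have s1: "summable (\<lambda>n. tt K (Suc n) * z^(Suc n))" by (subst summable_Suc_iff) (rule s)
  have "(\<Sum>n. tt K (Suc n) * z^(Suc n)) = (\<Sum>n. tt K n * z^n) - 1"
    using suminf_split_head[OF s] by simp
  moreover have "(\<Sum>n. tt K (Suc n) * z^(Suc n)) \<le> (\<Sum>n. z * tt K (Suc n))"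
  proof (rule suminf_le[OF _ s1 summable_mult[OF st1]])
    fix n
    have "z^(Suc n) \<le> z" using assms by (simp add: power_le_one mult_left_le)
    then show "tt K (Suc n) * z ^ Suc n \<le> z * tt K (Suc n)"
      using tt_nonneg[of K "Suc n"] K mult_left_mono[of "z^(Suc n)" z "tt K (Suc n)"] by (simp add: mult.commute)
  qed
  moreover have "(\<Sum>n. z * tt K (Suc n)) = z * (suminf (tt K) - 1)"
    using suminf_mult[OF st1, of z] suminf_split_head[OF st] by simp
  moreover have "suminf (tt K) - 1 \<le> 1/2" using sum_tt_le_S[OF assms(1)] summable_S(2)[OF assms(1)] by linarith
  moreover have "z * (suminf (tt K) - 1) \<le> z * (1/2)"
    using calculation(4) assms by (intro mult_left_mono) auto
  ultimately show ?thesis by (simp add: hyp_tt)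
qed

lemma Gamma_plus1_pos: "(x::real) > 0 \<Longrightarrow> Gamma (x + 1) = x * Gamma x"
  by (rule Gamma_plus1) (auto dest: nonpos_Ints_nonpos)

lemma Gamma_sq_le: assumes "(x::real) > 0" shows "Gamma (x+1/2)^2 \<le> x * Gamma x ^ 2"
proof -
  have c: "(ln \<circ> Gamma) ((1 - 1/2) *\<^sub>R x + (1/2) *\<^sub>R (x+1)) \<le> (1 - 1/2) * (ln \<circ> Gamma) x + (1/2) * (ln \<circ> Gamma) (x+1)"
    by (rule convex_onD[OF log_convex_Gamma_real]) (use assms in auto)
  have e: "(1 - 1/2) *\<^sub>R x + (1/2) *\<^sub>R (x+1) = x + 1/2" by (simp add: field_simps)
  have p1: "Gamma (x+1/2) > 0" "Gamma x > 0" "Gamma (x+1) > 0" using assms by auto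
  from c have "2 * ln (Gamma (x+1/2)) \<le> ln (Gamma x) + ln (Gamma (x+1))" unfolding e by simp
  hence "ln (Gamma (x+1/2)^2) \<le> ln (Gamma x * Gamma (x+1))"
    using p1 by (simp add: ln_mult ln_realpow)
  hence "Gamma (x+1/2)^2 \<le> Gamma x * Gamma (x+1)" using p1 by simp
  also have "\<dots> = x * Gamma x ^ 2" using Gamma_plus1_pos[OF assms] by (simp add: power2_eq_square)
  finally show ?thesis .
qed

lemma Gamma_sq_ge: assumes "(x::real) > 0" shows "x^2 * Gamma x ^ 2 \<le> (x+1/2) * Gamma (x+1/2)^2"
proof -
  have c: "(ln \<circ> Gamma) ((1 - 1/2) *\<^sub>R (x+1/2) + (1/2) *\<^sub>R (x+3/2)) \<le> (1 - 1/2) * (ln \<circ> Gamma) (x+1/2) + (1/2) * (ln \<circ> Gamma) (x+3/2)"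
    by (rule convex_onD[OF log_convex_Gamma_real]) (use assms in auto)
  have e: "(1 - 1/2) *\<^sub>R (x+1/2) + (1/2) *\<^sub>R (x+3/2) = x + 1" by (simp add: field_simps)
  have p1: "Gamma (x+1/2) > 0" "Gamma (x+3/2) > 0" "Gamma (x+1) > 0" using assms by auto
  from c have "2 * ln (Gamma (x+1)) \<le> ln (Gamma (x+1/2)) + ln (Gamma (x+3/2))" unfolding e by simp
  hence "ln (Gamma (x+1)^2) \<le> ln (Gamma (x+1/2) * Gamma (x+3/2))"
    using p1 by (simp add: ln_mult ln_realpow)
  hence "Gamma (x+1)^2 \<le> Gamma (x+1/2) * Gamma (x+3/2)" using p1 by simp
  moreover have "Gamma (x+3/2) = (x+1/2) * Gamma (x+1/2)"
    using Gamma_plus1_pos[of "x+1/2"] assms by (simp add: add.assoc)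
  moreover have "Gamma (x+1) = x * Gamma x" by (rule Gamma_plus1_pos[OF assms])
  ultimately show ?thesis by (simp add: power2_eq_square algebra_simps)
qed

definition Cc :: "nat \<Rightarrow> real" where
  "Cc k = 2 / real k * (Gamma ((real k + 1) / 2) / Gamma (real k / 2))\<^sup>2"

lemma Fstar_G: assumes "real k / 2 + 1 \<ge> 5/2" "\<bar>g\<bar> \<le> 1"
  shows "Fstar k g = Cc k * G (real k / 2 + 1) g"
  using G_hyp[OF assms] unfolding Fstar_def Cc_def by (simp add: mult_ac)

lemma Cc_bounds: assumes "k > 0"
  shows "Cc k \<le> 1" "real k / (real k + 1) \<le> Cc k"
proof -
  define x where "x = real k / 2"
  have x: "x > 0" using assms by (simp add: x_def)
  have e1: "(real k + 1) / 2 = x + 1/2" by (simp add: x_def field_simps)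
  have k2: "real k / 2 = x" by (simp add: x_def)
  have k2': "real k = 2 * x" by (simp add: x_def)
  have Cx: "Cc k = Gamma (x+1/2)^2 / (x * Gamma x ^ 2)"
    unfolding Cc_def e1 k2 unfolding k2' using x by (simp add: power_divide)
  have gp: "Gamma x > 0" using x by simp
  have pos: "x * Gamma x ^ 2 > 0" using x gp by (intro mult_pos_pos zero_less_power) auto
  show "Cc k \<le> 1" unfolding Cx using Gamma_sq_le[OF x] pos by (simp add: divide_le_eq)
  have "real k / (real k + 1) = x / (x + 1/2)" by (simp add: x_def field_simps)
  also have "\<dots> \<le> Gamma (x+1/2)^2 / (x * Gamma x ^ 2)"
  proof -
    have xb: "x * (x * Gamma x ^ 2) \<le> (x + 1/2) * Gamma (x+1/2)^2"
      using Gamma_sq_ge[OF x] by (simp add: power2_eq_square mult_ac)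
    have "x / (x + 1/2) * (x * Gamma x ^ 2) = x * (x * Gamma x ^ 2) / (x + 1/2)" by simp
    also have "\<dots> \<le> Gamma (x+1/2)^2" using xb x by (simp add: divide_le_eq mult_ac)
    finally show ?thesis using pos by (simp add: le_divide_eq)
  qed
  finally show "real k / (real k + 1) \<le> Cc k" unfolding Cx .
qed

lemma Cc_pos: assumes "k > 0" shows "Cc k > 0"
proof -
  have "Gamma ((real k + 1) / 2) > 0" "Gamma (real k / 2) > 0" using assms by auto
  then show ?thesis unfolding Cc_def using assms by (intro mult_pos_pos divide_pos_pos zero_less_power) auto
qed

lemma Cc3: "Cc 3 = 8 / (3 * pi)"
proof -
  have g2: "Gamma (2::real) = 1" using Gamma_numeral[of "num.Bit0 num.One"] by simp
  have "Gamma (3/2::real) = Gamma (1/2 + 1)" by simp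
  also have "\<dots> = 1/2 * sqrt pi" by (subst Gamma_plus1_pos) (auto simp: Gamma_one_half_real)
  finally have g32: "Gamma (3/2::real) = sqrt pi / 2" by simp
  show ?thesis unfolding Cc_def by (simp add: g2 g32 power_divide)
qed

definition uu :: "nat \<Rightarrow> real" where "uu n = pochhammer (1/2) n / fact n"

lemma uu_nonneg: "uu n \<ge> 0" unfolding uu_def by (intro divide_nonneg_pos pochhammer_nonneg) auto

lemma tt52: "tt (5/2) n = uu n * (3/2) * (1/(2*real n+1) - 1/(2*real n+3))"
proof -
  have p52: "pochhammer (5/2::real) n > 0" by (rule pochhammer_pos) auto
  have e: "pochhammer (1/2::real) n = 3 * pochhammer (5/2) n / ((2*real n+1)*(2*real n+3))"
    using poch52[of n] by (simp add: eq_divide_eq del: of_nat_mult)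
  have "tt (5/2) n = uu n * (pochhammer (1/2) n / pochhammer (5/2) n)" by (simp add: tt_def uu_def)
  also have "pochhammer (1/2) n / pochhammer (5/2) n = 3/((2*real n+1)*(2*real n+3))"
    using e p52 by simp
  also have "3/((2*real n+1)*(2*real n+3)) = (3/2) * (1/(2*real n+1) - 1/(2*real n+3))"
  proof -
    have "2*real n+1 > 0" "2*real n+3 > 0" by auto
    then show ?thesis by (simp add: divide_simps)
  qed
  finally show ?thesis by simp
qed

lemma poly_int: "((\<lambda>s. s^(2*n) * (1 - s\<^sup>2)) has_integral (1/(2*real n+1) - 1/(2*real n+3))) {0..1::real}"
proof -
  define F where "F s = s^(2*n+1)/(2*real n+1) - s^(2*n+3)/(2*real n+3)" for s :: real
  have "((\<lambda>s. s^(2*n) * (1 - s\<^sup>2)) has_integral (F 1 - F 0)) {0..1::real}"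
  proof (rule fundamental_theorem_of_calculus)
    fix x :: real
    have d1: "((\<lambda>s. s^(2*n+1)) has_real_derivative (real (2*n+1) * x^(2*n))) (at x)"
      using DERIV_pow[of "2*n+1" x] by simp
    have d2: "((\<lambda>s. s^(2*n+3)) has_real_derivative (real (2*n+3) * x^(2*n+2))) (at x)"
      using DERIV_pow[of "2*n+3" x] by (simp add: numeral_3_eq_3)
    have "(F has_real_derivative (real (2*n+1) * x^(2*n)/(2*real n+1) - real (2*n+3) * x^(2*n+2)/(2*real n+3))) (at x)"
      unfolding F_def by (intro DERIV_diff DERIV_cdivide d1 d2)
    hence "(F has_real_derivative (real (2*n+1) * x^(2*n)/(2*real n+1) - real (2*n+3) * x^(2*n+2)/(2*real n+3))) (at x within {0..1})"
      by (rule has_field_derivative_at_within)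
    also have "(real (2*n+1) * x^(2*n)/(2*real n+1) - real (2*n+3) * x^(2*n+2)/(2*real n+3)) = x^(2*n) * (1 - x\<^sup>2)"
    proof -
      have ne: "2*real n+1 \<noteq> 0" "2*real n+3 \<noteq> 0" by linarith+
      have e1: "real (2*n+1) = 2*real n+1" "real (2*n+3) = 2*real n+3" by simp_all
      have a: "real (2*n+1) * x^(2*n)/(2*real n+1) = x^(2*n)"
        unfolding e1 using ne by (metis nonzero_mult_div_cancel_left times_divide_eq_left)
      have b: "real (2*n+3) * x^(2*n+2)/(2*real n+3) = x^(2*n+2)"
        unfolding e1 using ne by (metis nonzero_mult_div_cancel_left times_divide_eq_left)
      show ?thesis unfolding a b by (simp add: power_add algebra_simps power2_eq_square)
    qed
    finally show "(F has_vector_derivative x^(2*n) * (1 - x\<^sup>2)) (at x within {0..1})"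
      by (simp add: has_real_derivative_iff_has_vector_derivative)
  qed simp
  also have "F 1 - F 0 = 1/(2*real n+1) - 1/(2*real n+3)" by (simp add: F_def)
  finally show ?thesis .
qed

lemma sqrt_int: "((\<lambda>s. sqrt (1 - s\<^sup>2)) has_integral pi/4) {0..1::real}"
proof -
  define F where "F s = (s * sqrt (1 - s\<^sup>2) + arcsin s) / 2" for s :: real
  have "((\<lambda>s. sqrt (1 - s\<^sup>2)) has_integral (F 1 - F 0)) {0..1::real}"
  proof (rule fundamental_theorem_of_calculus_interior)
    show "continuous_on {0..1} F" unfolding F_def
      by (intro continuous_intros) (auto simp: power_le_one)
    fix s :: real assume s: "s \<in> {0<..<1}"
    have s1: "1 - s\<^sup>2 > 0" using s abs_square_less_1[of s] by simp
    define r where "r = sqrt (1 - s\<^sup>2)"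
    have r: "r > 0" "r\<^sup>2 = 1 - s\<^sup>2" using s1 by (auto simp: r_def)
    have D1: "((\<lambda>s. 1 - s\<^sup>2) has_real_derivative (- 2 * s)) (at s)" by (auto intro!: derivative_eq_intros)
    have D2: "(sqrt has_real_derivative inverse (sqrt (1 - s\<^sup>2)) / 2) (at (1 - s\<^sup>2))"
      by (rule DERIV_real_sqrt[OF s1])
    have D3: "((\<lambda>s. sqrt (1 - s\<^sup>2)) has_real_derivative (inverse r / 2 * (- 2 * s))) (at s)"
      using DERIV_chain2[OF D2 D1] by (simp add: r_def)
    have D4: "((\<lambda>s. s * sqrt (1 - s\<^sup>2)) has_real_derivative (1 * r + (inverse r / 2 * (- 2 * s)) * s)) (at s)"
      using DERIV_mult[OF DERIV_ident D3] by (simp add: r_def)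
    have D5: "(arcsin has_real_derivative inverse r) (at s)"
      unfolding r_def by (rule DERIV_arcsin) (use s in auto)
    have D6: "(F has_real_derivative (1 * r + (inverse r / 2 * (- 2 * s)) * s + inverse r) / 2) (at s)"
      unfolding F_def by (intro DERIV_cdivide DERIV_add D4 D5)
    have eq: "(1 * r + (inverse r / 2 * (- 2 * s)) * s + inverse r) / 2 = r"
    proof -
      have "(1 * r + (inverse r / 2 * (- 2 * s)) * s + inverse r) / 2 = (r * r - s * s + 1) / (2 * r)"
        using r(1) by (simp add: field_simps)
      also have "r * r - s * s + 1 = 2 * (r * r)" using r(2) by (simp add: power2_eq_square)
      finally show ?thesis using r(1) by simp
    qed
    from D6 have "(F has_real_derivative r) (at s)" by (simp only: eq)
    then have "(F has_real_derivative sqrt (1 - s\<^sup>2)) (at s)" by (simp only: r_def)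
    then show "(F has_vector_derivative sqrt (1 - s\<^sup>2)) (at s)"
      by (simp add: has_real_derivative_iff_has_vector_derivative)
  qed simp
  also have "F 1 - F 0 = pi/4" by (simp add: F_def)
  finally show ?thesis .
qed

lemma uu_sums: assumes "0 \<le> x" "x < 1" shows "(\<lambda>n. uu n * x^n) sums ((1 - x) powr (-1/2))"
proof -
  have "\<bar>-x\<bar> < 1" using assms by simp
  from gen_binomial_real[OF this, of "-1/2"]
  have s: "(\<lambda>n. ((-1/2) gchoose n) * (-x)^n) sums (1 + -x) powr (-1/2)" .
  have e: "((-1/2) gchoose n) * (-x)^n = uu n * x^n" for n
  proof -
    have g: "((-1/2::real) gchoose n) = (-1)^n * pochhammer (1/2) n / fact n"
      using gbinomial_pochhammer[of "-1/2::real" n] by simp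
    have m: "(-x::real)^n = (-1)^n * x^n" by (rule power_minus)
    have o: "(-1::real)^n * (-1)^n = 1" by (simp add: power_mult_distrib[symmetric])
    have "((-1/2) gchoose n) * (-x)^n = ((-1::real)^n * (-1)^n) * (pochhammer (1/2) n / fact n * x^n)"
      unfolding g m by (simp only: mult_ac times_divide_eq_left times_divide_eq_right)
    also have "\<dots> = uu n * x^n" unfolding o uu_def by simp
    finally show ?thesis .
  qed
  from s show ?thesis unfolding e by simp
qed

lemma partial_int_bound: "(\<Sum>n<N. tt (5/2) n) \<le> 3 * pi / 8"
proof -
  have I: "((\<lambda>s. (3/2) * ((1 - s\<^sup>2) * (\<Sum>n<N. uu n * (s\<^sup>2)^n))) has_integral
           (\<Sum>n<N. tt (5/2) n)) {0..1::real}"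
  proof -
    have "((\<lambda>s. \<Sum>n<N. uu n * (3/2) * (s^(2*n) * (1 - s\<^sup>2))) has_integral
           (\<Sum>n<N. uu n * (3/2) * (1/(2*real n+1) - 1/(2*real n+3)))) {0..1::real}"
      by (intro has_integral_sum has_integral_mult_right poly_int) auto
    moreover have "(\<lambda>s. \<Sum>n<N. uu n * (3/2) * (s^(2*n) * (1 - s\<^sup>2))) =
          (\<lambda>s. (3/2) * ((1 - s\<^sup>2) * (\<Sum>n<N. uu n * (s\<^sup>2)^n)))"
    proof (intro ext)
      fix s :: real
      have pm: "s^(2*n) = (s\<^sup>2)^n" for n by (simp add: power_mult)
      show "(\<Sum>n<N. uu n * (3/2) * (s^(2*n) * (1 - s\<^sup>2))) = (3/2) * ((1 - s\<^sup>2) * (\<Sum>n<N. uu n * (s\<^sup>2)^n))"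
        unfolding pm by (simp add: sum_distrib_left mult_ac)
    qed
    ultimately show ?thesis by (simp add: tt52)
  qed
  have J: "((\<lambda>s. (3/2) * sqrt (1 - s\<^sup>2)) has_integral ((3/2) * (pi/4))) {0..1::real}"
    by (intro has_integral_mult_right sqrt_int)
  have "(\<Sum>n<N. tt (5/2) n) \<le> (3/2) * (pi/4)"
  proof (rule has_integral_le[OF I J])
    fix s :: real assume s: "s \<in> {0..1}"
    show "(3/2) * ((1 - s\<^sup>2) * (\<Sum>n<N. uu n * (s\<^sup>2)^n)) \<le> (3/2) * sqrt (1 - s\<^sup>2)"
    proof (cases "s = 1")
      case True then show ?thesis by simp
    next
      case False
      then have x: "0 \<le> s\<^sup>2" "s\<^sup>2 < 1" using s by (auto simp: abs_square_less_1)
      have "(\<Sum>n<N. uu n * (s\<^sup>2)^n) \<le> (\<Sum>n. uu n * (s\<^sup>2)^n)"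
        using uu_sums[OF x] by (intro sum_le_suminf) (auto simp: sums_iff intro!: mult_nonneg_nonneg uu_nonneg)
      also have "\<dots> = (1 - s\<^sup>2) powr (-1/2)" using uu_sums[OF x] by (simp add: sums_iff)
      finally have "(1 - s\<^sup>2) * (\<Sum>n<N. uu n * (s\<^sup>2)^n) \<le> (1 - s\<^sup>2) * (1 - s\<^sup>2) powr (-1/2)"
        using x by (intro mult_left_mono) auto
      also have "(1 - s\<^sup>2) * (1 - s\<^sup>2) powr (-1/2) = sqrt (1 - s\<^sup>2)"
      proof -
        have p: "1 - s\<^sup>2 > 0" using x by simp
        have "(1 - s\<^sup>2) powr (1/2) = (1 - s\<^sup>2) powr (1 + (-1/2))" by simp
        also have "\<dots> = (1 - s\<^sup>2) powr 1 * (1 - s\<^sup>2) powr (-1/2)" by (rule powr_add)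
        also have "\<dots> = (1 - s\<^sup>2) * (1 - s\<^sup>2) powr (-1/2)" using p by simp
        finally have "(1 - s\<^sup>2) * (1 - s\<^sup>2) powr (-1/2) = (1 - s\<^sup>2) powr (1/2)" by simp
        also have "\<dots> = sqrt (1 - s\<^sup>2)" using p by (simp add: powr_half_sqrt)
        finally show ?thesis .
      qed
      finally show ?thesis by simp
    qed
  qed
  then show ?thesis by simp
qed

lemma sum_tt52: "suminf (tt (5/2)) \<le> 3 * pi / 8"
  by (rule suminf_le_const[OF summable_tt partial_int_bound]) simp

lemma meq: fixes x c H :: real assumes "x > 0"
  shows "(1 - (1/x\<^sup>2)*c*((-1/x)*H))/(1 - (-1/x)) = 1 - 1/(x+1) + c*H/((x+1)*x\<^sup>2)"
proof -
  have "x + 1 > 0" using assms by simp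
  then show ?thesis using assms by (simp add: divide_simps)
qed

lemma G_nonpos_g0: assumes "K \<ge> 5/2" "-1 \<le> g" "g \<le> 0"
  shows "G K g = g * hyp2F1 (1/2) (1/2) K (g\<^sup>2)"
  using G_hyp[of K g] assms by simp

lemma main_ge3:
  fixes d :: nat assumes d3: "d \<ge> 3"
  shows "beta d = 1 - 1/real d + Cc (d\<^sup>2 - 1) * hyp2F1 (1/2) (1/2) (real (d\<^sup>2 - 1) / 2 + 1) ((-1 / (real d - 1))\<^sup>2)
                    / (real d * (real d - 1)\<^sup>2)"
    (is "_ = ?m")
proof -
  define k where "k = d\<^sup>2 - 1"
  define D where "D = real d"
  define K where "K = real k / 2 + 1"
  define c where "c = Cc k"
  define g0 where "g0 = -1 / (D - 1)"
  define H0 where "H0 = hyp2F1 (1/2) (1/2) K (g0\<^sup>2)"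
  define a where "a = 1 / (D - 1)\<^sup>2"
  define S where "S = (\<Sum>n. (2*real n+1) * tt K n)"
  define f where "f \<gamma> = (1 - Fstar k \<gamma> / (D - 1)\<^sup>2) / (1 - \<gamma>)" for \<gamma>
  have D3: "D \<ge> 3" using d3 by (simp add: D_def)
  have "3 * 3 \<le> d * d" by (rule mult_le_mono[OF d3 d3])
  hence dsq: "d\<^sup>2 \<ge> 9" by (simp add: power2_eq_square)
  have kr: "real k = D\<^sup>2 - 1" using dsq by (simp add: k_def D_def of_nat_diff)
  have "3 * 3 \<le> D * D" using D3 by (intro mult_mono) auto
  hence k8: "real k \<ge> 8" using kr by (simp add: power2_eq_square)
  have K5: "K \<ge> 5" using k8 by (simp add: K_def)
  have K52: "K \<ge> 5/2" using K5 by simp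
  have kpos: "k > 0" using k8 by simp
  have c1: "c \<le> 1" "c > 0" using Cc_bounds(1)[OF kpos] Cc_pos[OF kpos] by (auto simp: c_def)
  have g0b: "-1/2 \<le> g0" "g0 < 0" using D3 by (auto simp: g0_def field_simps)
  have g0sq: "0 \<le> g0\<^sup>2" "g0\<^sup>2 \<le> 1" using g0b by (auto simp: abs_square_le_1)
  have H0: "1 \<le> H0" using hyp_ge1[OF K52 g0sq] by (simp add: H0_def)
  have SS: "S \<le> 3/2" "0 \<le> S" using summable_S[OF K5] K5 by (auto simp: S_def intro!: suminf_nonneg mult_nonneg_nonneg tt_nonneg)
  have "2 * 2 \<le> (D - 1) * (D - 1)" using D3 by (intro mult_mono) auto
  hence a: "0 < a" "a \<le> 1/4" using D3 by (auto simp: a_def power2_eq_square divide_simps)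
  have Fs: "Fstar k \<gamma> / (D - 1)\<^sup>2 = a * c * G K \<gamma>" if "\<bar>\<gamma>\<bar> \<le> 1" for \<gamma>
    using Fstar_G[of k \<gamma>] K52 that by (simp add: K_def a_def c_def)
  have Gg0: "G K g0 = g0 * H0" using G_nonpos_g0[OF K52] g0b by (simp add: H0_def)
  have D1: "D - 1 > 0" using D3 by simp
  have m_eq: "f g0 = 1 - 1/D + c * H0 / (D * (D - 1)\<^sup>2)"
  proof -
    have "f g0 = (1 - a * c * (g0 * H0)) / (1 - g0)" using Fs[of g0] g0b by (simp add: f_def Gg0)
    also have "\<dots> = 1 - 1/D + c * H0 / (D * (D - 1)\<^sup>2)"
      using meq[OF D1, of c H0] unfolding a_def g0_def by simp
    finally show ?thesis .
  qed
  define m where "m = f g0"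
  have m23: "m \<ge> 2/3"
  proof -
    have "c * H0 / (D * (D - 1)\<^sup>2) \<ge> 0" using c1 H0 D3 by simp
    moreover have "1 - 1/D \<ge> 2/3" using D3 by (simp add: field_simps)
    ultimately show ?thesis unfolding m_def m_eq by linarith
  qed
  have lower: "m \<le> f \<gamma>" if \<gamma>: "\<gamma> \<in> {g0..<1}" for \<gamma>
  proof -
    have gb: "g0 \<le> \<gamma>" "\<gamma> < 1" "\<bar>\<gamma>\<bar> \<le> 1" using \<gamma> g0b by auto
    have mg0: "m * (1 - g0) = 1 - a * c * G K g0"
      using Fs[of g0] g0b by (simp add: m_def f_def)
    have Gd: "G K \<gamma> - G K g0 \<le> (\<gamma> - g0) * S"
      unfolding S_def by (rule G_diff[OF K5]) (use gb g0b in auto)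
    have ac: "0 \<le> a * c" using a c1 by simp
    have acS: "a * c * S \<le> m"
    proof -
      have "a * c * S \<le> (1/4) * 1 * (3/2)" using a c1 SS by (intro mult_mono) auto
      then show ?thesis using m23 by linarith
    qed
    have "a * c * (G K \<gamma> - G K g0) \<le> a * c * ((\<gamma> - g0) * S)" using Gd ac by (rule mult_left_mono)
    also have "\<dots> = (a * c * S) * (\<gamma> - g0)" by (simp add: algebra_simps)
    also have "\<dots> \<le> m * (\<gamma> - g0)" using acS gb by (intro mult_right_mono) auto
    finally have "a * c * (G K \<gamma> - G K g0) \<le> m * (\<gamma> - g0)" .
    hence num: "m * (1 - \<gamma>) \<le> 1 - a * c * G K \<gamma>" using mg0 by (simp add: algebra_simps)
    have "f \<gamma> = (1 - a * c * G K \<gamma>) / (1 - \<gamma>)" using Fs[OF gb(3)] by (simp add: f_def)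
    moreover have "1 - \<gamma> > 0" using gb by simp
    ultimately show ?thesis using num by (simp add: le_divide_eq)
  qed
  have bdd: "bdd_below (f ` {g0..<1})" by (rule bdd_belowI2[of _ m]) (rule lower)
  have g0in: "g0 \<in> {g0..<1}" using g0b by simp
  have beta_eq: "beta d = (INF \<gamma> \<in> {g0..<1}. f \<gamma>)"
    unfolding beta_def f_def g0_def D_def k_def by simp
  have "beta d = m"
  proof (rule antisym)
    show "beta d \<le> m" unfolding beta_eq m_def by (rule cINF_lower[OF bdd g0in])
    show "m \<le> beta d" unfolding beta_eq using g0in lower by (intro cINF_greatest) auto
  qed
  moreover have "m = 1 - 1/D + c * H0 / (D * (D - 1)\<^sup>2)" by (simp add: m_def m_eq)
  moreover have "1 - 1/D + c * H0 / (D * (D - 1)\<^sup>2) = ?m" unfolding c_def H0_def K_def g0_def D_def k_def by simp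
  ultimately show ?thesis by simp
qed

lemma beta2: "beta 2 > 1/2"
proof -
  define c where "c = Cc 3"
  have c: "c = 8 / (3 * pi)" by (simp add: c_def Cc3)
  have cpos: "c > 0" unfolding c by simp
  have K: "real 3 / 2 + 1 = (5/2::real)" by simp
  have st: "summable (tt (5/2))" by (rule summable_tt) simp
  have cS: "c * suminf (tt (5/2)) \<le> 1"
  proof -
    have "c * suminf (tt (5/2)) \<le> c * (3 * pi / 8)" using sum_tt52 cpos by (intro mult_left_mono) auto
    also have "\<dots> = 1" unfolding c by simp
    finally show ?thesis .
  qed
  have key: "c \<le> (1 - Fstar (2\<^sup>2 - 1) \<gamma> / (real 2 - 1)\<^sup>2) / (1 - \<gamma>)" if \<gamma>: "\<gamma> \<in> {-1 / (real 2 - 1)..<1}" for \<gamma>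
  proof -
    have gb: "-1 \<le> \<gamma>" "\<gamma> < 1" "\<bar>\<gamma>\<bar> \<le> 1" using \<gamma> by auto
    have F3: "Fstar 3 \<gamma> = c * G (5/2) \<gamma>" using Fstar_G[of 3 \<gamma>] gb by (simp add: c_def)
    have sG: "summable (\<lambda>n. tt (5/2) n * \<gamma>^(2*n+1))" by (rule summable_G) (use gb in auto)
    have "suminf (tt (5/2)) - G (5/2) \<gamma> = (\<Sum>n. tt (5/2) n - tt (5/2) n * \<gamma>^(2*n+1))"
      unfolding G_def by (rule suminf_diff[OF st sG])
    also have "\<dots> \<ge> (\<Sum>n\<in>{0}. tt (5/2) n - tt (5/2) n * \<gamma>^(2*n+1))"
    proof (rule sum_le_suminf)
      show "summable (\<lambda>n. tt (5/2) n - tt (5/2) n * \<gamma>^(2*n+1))" by (rule summable_diff[OF st sG])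
      fix n
      have "\<gamma>^(2*n+1) \<le> 1"
      proof -
        have "\<gamma>^(2*n+1) \<le> \<bar>\<gamma>\<bar>^(2*n+1)" by (metis abs_ge_self power_abs)
        also have "\<dots> \<le> 1" using gb by (intro power_le_one) auto
        finally show ?thesis .
      qed
      moreover have "tt (5/2) n \<ge> 0" by (rule tt_nonneg) simp
      ultimately have "tt (5/2) n * \<gamma>^(2*n+1) \<le> tt (5/2) n * 1" by (intro mult_left_mono) auto
      then show "0 \<le> tt (5/2) n - tt (5/2) n * \<gamma>^(2*n+1)" by simp
    qed simp_all
    finally have "1 - \<gamma> \<le> suminf (tt (5/2)) - G (5/2) \<gamma>" by simp
    hence "c * (1 - \<gamma>) \<le> c * (suminf (tt (5/2)) - G (5/2) \<gamma>)" using cpos by (intro mult_left_mono) auto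
    also have "\<dots> \<le> 1 - c * G (5/2) \<gamma>" using cS by (simp add: algebra_simps)
    finally have num: "c * (1 - \<gamma>) \<le> 1 - Fstar 3 \<gamma>" using F3 by simp
    have "1 - \<gamma> > 0" using gb by simp
    then show ?thesis using num by (simp add: le_divide_eq)
  qed
  have "c \<le> beta 2" unfolding beta_def
    by (rule cINF_greatest) (use key in auto)
  moreover have "c > 1/2"
  proof -
    have "3 * pi < 16" using pi_less_4 by simp
    then show ?thesis unfolding c by (simp add: field_simps)
  qed
  ultimately show ?thesis by simp
qed

lemma qeq: fixes x T :: real assumes "x > 1"
  shows "(T / (x * (x - 1)\<^sup>2)) / (1 / x ^ 3) = T * (x\<^sup>2 / (x - 1)\<^sup>2)"
proof -
  have "x - 1 \<noteq> 0" "x \<noteq> 0" using assms by auto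
  then show ?thesis by (simp add: divide_simps power2_eq_square power3_eq_cube)
qed

lemma ge3_bounds:
  fixes d :: nat assumes d3: "d \<ge> 3"
  defines "T \<equiv> Cc (d\<^sup>2 - 1) * hyp2F1 (1/2) (1/2) (real (d\<^sup>2 - 1) / 2 + 1) ((-1 / (real d - 1))\<^sup>2)"
  shows "beta d - (1 - 1/real d) = T / (real d * (real d - 1)\<^sup>2)"
    and "((real d)\<^sup>2 - 1) / (real d)\<^sup>2 \<le> T"
    and "T \<le> 1 + (1 / (real d - 1))\<^sup>2 / 2"
proof -
  show "beta d - (1 - 1/real d) = T / (real d * (real d - 1)\<^sup>2)"
    using main_ge3[OF d3] unfolding T_def by simp
  define k where "k = d\<^sup>2 - 1"
  define z where "z = (-1 / (real d - 1))\<^sup>2"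
  define K where "K = real k / 2 + 1"
  have "3 * 3 \<le> d * d" by (rule mult_le_mono[OF d3 d3])
  hence dsq: "d\<^sup>2 \<ge> 9" by (simp add: power2_eq_square)
  have kr: "real k = (real d)\<^sup>2 - 1" using dsq by (simp add: k_def of_nat_diff)
  have kpos: "k > 0" using dsq by (simp add: k_def)
  have "3 * 3 \<le> real d * real d" using d3 by (intro mult_mono) auto
  hence K5: "K \<ge> 5" using kr by (simp add: K_def power2_eq_square)
  have "2 \<le> real d - 1" using d3 by simp
  hence z: "0 \<le> z" "z \<le> 1" by (auto simp: z_def power_divide power_le_one divide_le_eq_1 abs_square_le_1)
  have H: "1 \<le> hyp2F1 (1/2) (1/2) K z" "hyp2F1 (1/2) (1/2) K z \<le> 1 + z/2"
    using hyp_ge1[of K z] hyp_le[OF K5 z] K5 z by auto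
  have C: "real k / (real k + 1) \<le> Cc k" "Cc k \<le> 1" using Cc_bounds[OF kpos] by auto
  have Tk: "T = Cc k * hyp2F1 (1/2) (1/2) K z" by (simp add: T_def k_def K_def z_def)
  have "real k / (real k + 1) = ((real d)\<^sup>2 - 1) / (real d)\<^sup>2" by (simp add: kr)
  hence "((real d)\<^sup>2 - 1) / (real d)\<^sup>2 \<le> Cc k * 1" using C by simp
  also have "\<dots> \<le> T" unfolding Tk using H C Cc_pos[OF kpos] by (intro mult_left_mono) auto
  finally show "((real d)\<^sup>2 - 1) / (real d)\<^sup>2 \<le> T" .
  have "T \<le> 1 * (1 + z/2)" unfolding Tk using H C by (intro mult_mono) auto
  then show "T \<le> 1 + (1 / (real d - 1))\<^sup>2 / 2" by (simp add: z_def power_divide)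
qed

theorem mainTheorem3:
  shows "(\<forall>d::nat. d \<ge> 2 \<longrightarrow> beta d > 1 - 1 / real d)
         \<and> ((\<lambda>d::nat. beta d - (1 - 1 / real d)) \<sim>[at_top] (\<lambda>d. 1 / real d ^ 3))"
proof
  show "\<forall>d::nat. d \<ge> 2 \<longrightarrow> beta d > 1 - 1 / real d"
  proof (intro allI impI)
    fix d :: nat assume d2: "d \<ge> 2"
    show "beta d > 1 - 1 / real d"
    proof (cases "d = 2")
      case True then show ?thesis using beta2 by simp
    next
      case False
      then have d3: "d \<ge> 3" using d2 by simp
      define T where "T = Cc (d\<^sup>2 - 1) * hyp2F1 (1/2) (1/2) (real (d\<^sup>2 - 1) / 2 + 1) ((-1 / (real d - 1))\<^sup>2)"
      have b: "beta d - (1 - 1/real d) = T / (real d * (real d - 1)\<^sup>2)" "((real d)\<^sup>2 - 1) / (real d)\<^sup>2 \<le> T"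
        using ge3_bounds[OF d3] unfolding T_def by auto
      have "3 * 3 \<le> real d * real d" using d3 by (intro mult_mono) auto
      hence "(real d)\<^sup>2 \<ge> 9" by (simp add: power2_eq_square)
      hence "((real d)\<^sup>2 - 1) / (real d)\<^sup>2 > 0" using d3 by (intro divide_pos_pos) auto
      hence "T > 0" using b by linarith
      moreover have "real d * (real d - 1)\<^sup>2 > 0" using d3 by simp
      ultimately have "T / (real d * (real d - 1)\<^sup>2) > 0" by simp
      then show ?thesis using b by linarith
    qed
  qed
next
  define L where "L d = ((real d)\<^sup>2 - 1) / (real d)\<^sup>2 * ((real d)\<^sup>2 / (real d - 1)\<^sup>2)" for d :: nat
  define U where "U d = (1 + (1 / (real d - 1))\<^sup>2 / 2) * ((real d)\<^sup>2 / (real d - 1)\<^sup>2)" for d :: nat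
  define q where "q d = (beta d - (1 - 1 / real d)) / (1 / real d ^ 3)" for d :: nat
  have L: "L \<longlonglongrightarrow> 1" unfolding L_def by real_asymp
  have U: "U \<longlonglongrightarrow> 1" unfolding U_def by real_asymp
  have bnds: "L d \<le> q d \<and> q d \<le> U d" if d3: "d \<ge> 3" for d
  proof -
    define T where "T = Cc (d\<^sup>2 - 1) * hyp2F1 (1/2) (1/2) (real (d\<^sup>2 - 1) / 2 + 1) ((-1 / (real d - 1))\<^sup>2)"
    have b: "beta d - (1 - 1/real d) = T / (real d * (real d - 1)\<^sup>2)" "((real d)\<^sup>2 - 1) / (real d)\<^sup>2 \<le> T"
      "T \<le> 1 + (1 / (real d - 1))\<^sup>2 / 2"
      using ge3_bounds[OF d3] unfolding T_def by auto
    have d1: "real d - 1 > 0" "real d > 0" using d3 by auto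
    have qT: "q d = T * ((real d)\<^sup>2 / (real d - 1)\<^sup>2)"
      unfolding q_def b(1) using d1 by (intro qeq) simp
    have nn: "(real d)\<^sup>2 / (real d - 1)\<^sup>2 \<ge> 0" by simp
    show ?thesis unfolding qT L_def U_def using mult_right_mono[OF b(2) nn] mult_right_mono[OF b(3) nn] by blast
  qed
  have ev1: "eventually (\<lambda>d. L d \<le> q d) sequentially"
    using bnds by (auto simp: eventually_sequentially intro!: exI[of _ 3])
  have ev2: "eventually (\<lambda>d. q d \<le> U d) sequentially"
    using bnds by (auto simp: eventually_sequentially intro!: exI[of _ 3])
  have "q \<longlonglongrightarrow> 1" by (rule tendsto_sandwich[OF ev1 ev2 L U])
  then show "(\<lambda>d::nat. beta d - (1 - 1 / real d)) \<sim>[at_top] (\<lambda>d. 1 / real d ^ 3)"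
  proof (intro asymp_equivI')
    have "q = (\<lambda>d. (beta d - (1 - 1 / real d)) / (1 / real d ^ 3))" by (simp add: q_def fun_eq_iff)
    with \<open>q \<longlonglongrightarrow> 1\<close> show "((\<lambda>d. (beta d - (1 - 1 / real d)) / (1 / real d ^ 3)) \<longlongrightarrow> 1) at_top" by simp
  qed
qed

end
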